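(* Let $n\ge 2$ and let $H(t)$, $0\le t\le T$, be a piecewise-continuous time-dependent Hamiltonian on $n$ qubits which at every time is U(1)-invariant and 2-local. Then the phase $\Delta_3$ of the unitary it generates is an integer multiple of $2\pi$, i.e. $\Delta_3=0 \pmod{2\pi}$.
   Context: Qubits $1,\dots,n$, Hilbert space $(\mathbb{C}^2)^{\otimes n}$, $Z_j$ the Pauli $Z$ on qubit $j$. An operator is 2-local if it is a sum of terms each acting non-trivially on at most 2 qubits. For $m=0,\dots,n$, $\Pi_m$ is the projector onto the span of computational basis states with exactly $m$ qubits in state $|1\rangle$. A Hamiltonian is U(1)-invariant if it commutes with $\sum_j Z_j$. For a U(1)-invariant $H(t)$, $V=\mathcal{T}\exp(-i\int_0^T H(t)dt)$ (time-ordered exponential) satisfies $V=\bigoplus_{m=0}^n V_m$ with $V_m$ the restriction of $V$ to the range of $\Pi_m$; define $\theta_m=\arg\det(V_m)\in(-\pi,\pi]$ and $\Delta_3=\theta_{n-1}-\theta_1-(n-2)(\theta_n-\theta_0)\pmod{2\pi}$. *)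

theory Defs
  imports "HOL-Analysis.Analysis" "Jordan_Normal_Form.Determinant" "Jordan_Normal_Form.DL_Submatrix"
begin

text \<open>Qubits are indexed 0..n-1 (paper: 1..n). The computational basis state with index
  k < 2^n has qubit j in state |1> iff bit j of k is set.\<close>

definition qdim :: "nat \<Rightarrow> nat" where "qdim n = 2 ^ n"

definition pauliZ :: "nat \<Rightarrow> nat \<Rightarrow> complex mat" where
  "pauliZ n j = mat (qdim n) (qdim n) (\<lambda>(k,l). if k = l then (if bit k j then -1 else 1) else 0)"

definition totalZ :: "nat \<Rightarrow> complex mat" where
  "totalZ n = mat (qdim n) (qdim n) (\<lambda>(k,l). \<Sum>j<n. pauliZ n j $$ (k,l))"

definition u1_invariant :: "nat \<Rightarrow> complex mat \<Rightarrow> bool" where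
  "u1_invariant n A \<longleftrightarrow> A * totalZ n = totalZ n * A"

text \<open>A acts non-trivially only on the qubits in S: A = B_S \<otimes> identity on the other qubits.\<close>
definition acts_only_on :: "nat \<Rightarrow> nat set \<Rightarrow> complex mat \<Rightarrow> bool" where
  "acts_only_on n S A \<longleftrightarrow> A \<in> carrier_mat (qdim n) (qdim n) \<and>
     (\<exists>B :: (nat \<Rightarrow> bool) \<Rightarrow> (nat \<Rightarrow> bool) \<Rightarrow> complex.
        \<forall>k < qdim n. \<forall>l < qdim n.
          A $$ (k,l) = (if (\<forall>j<n. j \<notin> S \<longrightarrow> bit k j = bit l j)
                        then B (\<lambda>j. j \<in> S \<and> bit k j) (\<lambda>j. j \<in> S \<and> bit l j) else 0))"

definition two_local :: "nat \<Rightarrow> complex mat \<Rightarrow> bool" where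
  "two_local n A \<longleftrightarrow> A \<in> carrier_mat (qdim n) (qdim n) \<and>
     (\<exists>(N::nat) (terms :: nat \<Rightarrow> complex mat) (S :: nat \<Rightarrow> nat set).
        (\<forall>i<N. S i \<subseteq> {..<n} \<and> card (S i) \<le> 2 \<and> acts_only_on n (S i) (terms i)) \<and>
        (\<forall>k < qdim n. \<forall>l < qdim n. A $$ (k,l) = (\<Sum>i<N. terms i $$ (k,l))))"

definition hermitian_op :: "complex mat \<Rightarrow> bool" where
  "hermitian_op A \<longleftrightarrow> dim_row A = dim_col A \<and>
     (\<forall>k < dim_row A. \<forall>l < dim_row A. A $$ (l,k) = cnj (A $$ (k,l)))"

text \<open>Piecewise continuity of a function on [a,b]: finitely many break points, and on each
  open interval avoiding them the function agrees with a function continuous on the closed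
  interval (so one-sided limits exist at the break points).\<close>
definition piecewise_cont_on :: "real \<Rightarrow> real \<Rightarrow> (real \<Rightarrow> 'a::topological_space) \<Rightarrow> bool" where
  "piecewise_cont_on a b f \<longleftrightarrow> (\<exists>P. finite P \<and>
     (\<forall>c d. a \<le> c \<and> c < d \<and> d \<le> b \<and> {c<..<d} \<inter> P = {} \<longrightarrow>
        (\<exists>g. continuous_on {c..d} g \<and> (\<forall>t\<in>{c<..<d}. g t = f t))))"

text \<open>V is the time-ordered exponential T exp(-i \<integral>_0^T H): the (unique) continuous solution of
  V'(t) = -i H(t) V(t), V(0) = I, where the ODE holds off a finite set of times.\<close>
definition time_ordered_exp :: "nat \<Rightarrow> real \<Rightarrow> (real \<Rightarrow> complex mat) \<Rightarrow> (real \<Rightarrow> complex mat) \<Rightarrow> bool" where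
  "time_ordered_exp n T H V \<longleftrightarrow>
     (\<forall>t\<in>{0..T}. V t \<in> carrier_mat (qdim n) (qdim n)) \<and>
     V 0 = 1\<^sub>m (qdim n) \<and>
     (\<forall>k < qdim n. \<forall>l < qdim n. continuous_on {0..T} (\<lambda>s. V s $$ (k,l))) \<and>
     (\<exists>E. finite E \<and> (\<forall>t\<in>{0<..<T} - E. \<forall>k < qdim n. \<forall>l < qdim n.
        ((\<lambda>s. V s $$ (k,l)) has_vector_derivative ((- \<i>) * ((H t * V t) $$ (k,l)))) (at t)))"

text \<open>Basis indices with exactly m qubits in state |1> (range of Pi_m).\<close>
definition sector :: "nat \<Rightarrow> nat \<Rightarrow> nat set" where
  "sector n m = {k. k < qdim n \<and> card {j. j < n \<and> bit k j} = m}"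

text \<open>V_m: restriction of V to the range of Pi_m, written in the computational basis.\<close>
definition block :: "nat \<Rightarrow> complex mat \<Rightarrow> nat \<Rightarrow> complex mat" where
  "block n V m = submatrix V (sector n m) (sector n m)"

definition theta :: "nat \<Rightarrow> complex mat \<Rightarrow> nat \<Rightarrow> real" where
  "theta n V m = Arg (det (block n V m))"

definition Delta3 :: "nat \<Rightarrow> complex mat \<Rightarrow> real" where
  "Delta3 n V = theta n V (n - 1) - theta n V 1 - (real n - 2) * (theta n V n - theta n V 0)"

end

theory Submission
  imports Defs
begin


definition detN :: "nat \<Rightarrow> (nat \<Rightarrow> nat \<Rightarrow> complex) \<Rightarrow> complex" where
  "detN N f = det (mat N N (\<lambda>(i,j). f i j))"

lemma detN_expand: "detN N f = (\<Sum>p\<in>{p. p permutes {0..<N}}. signof p * (\<Prod>i\<in>{0..<N}. f i (p i)))"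
proof -
  have "detN N f = (\<Sum>p\<in>{p. p permutes {0..<N}}. signof p * (\<Prod>i\<in>{0..<N}. mat N N (\<lambda>(i,j). f i j) $$ (i, p i)))"
    unfolding detN_def by (rule det_def') simp
  also have "\<dots> = (\<Sum>p\<in>{p. p permutes {0..<N}}. signof p * (\<Prod>i\<in>{0..<N}. f i (p i)))"
    by (intro sum.cong refl arg_cong[where f="\<lambda>x. signof _ * x"] prod.cong) (auto simp: permutes_in_image)
  finally show ?thesis .
qed

lemma has_vd_prod:
  fixes f :: "nat \<Rightarrow> real \<Rightarrow> complex"
  assumes "\<And>i. i \<in> I \<Longrightarrow> (f i has_vector_derivative f' i) (at t)"
  shows "((\<lambda>s. \<Prod>i\<in>I. f i s) has_vector_derivative (\<Sum>i\<in>I. f' i * (\<Prod>j\<in>I - {i}. f j t))) (at t)"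
proof -
  have "((\<lambda>s. \<Prod>i\<in>I. f i s) has_derivative (\<lambda>y. \<Sum>i\<in>I. (y *\<^sub>R f' i) * (\<Prod>j\<in>I - {i}. f j t))) (at t)"
    using assms by (intro has_derivative_prod) (auto simp: has_vector_derivative_def)
  then show ?thesis unfolding has_vector_derivative_def
    by (simp add: scaleR_sum_right)
qed

lemma detN_ident_rows:
  assumes "i < N" "c < N" "i \<noteq> c" "\<And>b. g i b = g c b"
  shows "detN N g = 0"
  unfolding detN_def
  by (rule det_identical_rows[of _ N i c]) (use assms in \<open>auto simp: row_def\<close>)

lemma jacobi:
  fixes f :: "real \<Rightarrow> nat \<Rightarrow> nat \<Rightarrow> complex"
  assumes d: "\<And>i j. i<N \<Longrightarrow> j<N \<Longrightarrow> ((\<lambda>s. f s i j) has_vector_derivative (\<Sum>c<N. M i c * f t c j)) (at t)"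
  shows "((\<lambda>s. detN N (f s)) has_vector_derivative ((\<Sum>i<N. M i i) * detN N (f t))) (at t)"
proof -
  let ?P = "{p. p permutes {0..<N}}"
  define g where "g i c = (\<lambda>a b. if a = i then f t c b else f t a b)" for i c
  have pd: "((\<lambda>s. \<Prod>i\<in>{0..<N}. f s i (p i)) has_vector_derivative
      (\<Sum>i\<in>{0..<N}. (\<Sum>c<N. M i c * f t c (p i)) * (\<Prod>j\<in>{0..<N} - {i}. f t j (p j)))) (at t)"
    if "p \<in> ?P" for p
    using that by (intro has_vd_prod[where f="\<lambda>i s. f s i (p i)"] d) (auto simp: permutes_in_image)
  have "((\<lambda>s. detN N (f s)) has_vector_derivative
      (\<Sum>p\<in>?P. signof p * (\<Sum>i\<in>{0..<N}. (\<Sum>c<N. M i c * f t c (p i)) * (\<Prod>j\<in>{0..<N} - {i}. f t j (p j))))) (at t)"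
    unfolding detN_expand
    by (intro has_vector_derivative_sum has_vector_derivative_mult_right pd)
  moreover have "(\<Sum>p\<in>?P. signof p * (\<Sum>i\<in>{0..<N}. (\<Sum>c<N. M i c * f t c (p i)) * (\<Prod>j\<in>{0..<N} - {i}. f t j (p j))))
     = (\<Sum>i<N. \<Sum>c<N. M i c * detN N (g i c))"
  proof -
    have e: "(\<Prod>j\<in>{0..<N}. g i c j (p j)) = f t c (p i) * (\<Prod>j\<in>{0..<N} - {i}. f t j (p j))"
      if "i < N" for i c p
    proof -
      have "(\<Prod>j\<in>{0..<N}. g i c j (p j)) = g i c i (p i) * (\<Prod>j\<in>{0..<N} - {i}. g i c j (p j))"
        using that by (intro prod.remove) auto
      also have "(\<Prod>j\<in>{0..<N} - {i}. g i c j (p j)) = (\<Prod>j\<in>{0..<N} - {i}. f t j (p j))"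
        by (intro prod.cong) (auto simp: g_def)
      finally show ?thesis by (simp add: g_def)
    qed
    have "(\<Sum>p\<in>?P. signof p * (\<Sum>i\<in>{0..<N}. (\<Sum>c<N. M i c * f t c (p i)) * (\<Prod>j\<in>{0..<N} - {i}. f t j (p j))))
       = (\<Sum>p\<in>?P. \<Sum>i<N. \<Sum>c<N. M i c * (signof p * (f t c (p i) * (\<Prod>j\<in>{0..<N} - {i}. f t j (p j)))))"
      by (intro sum.cong refl) (simp add: sum_distrib_left sum_distrib_right atLeast0LessThan mult_ac)
    also have "\<dots> = (\<Sum>i<N. \<Sum>c<N. M i c * (\<Sum>p\<in>?P. signof p * (f t c (p i) * (\<Prod>j\<in>{0..<N} - {i}. f t j (p j)))))"
      by (simp add: sum.swap[of _ ?P] sum_distrib_left)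
    also have "\<dots> = (\<Sum>i<N. \<Sum>c<N. M i c * detN N (g i c))"
      unfolding detN_expand by (intro sum.cong refl) (simp add: e)
    finally show ?thesis .
  qed
  moreover have "(\<Sum>i<N. \<Sum>c<N. M i c * detN N (g i c)) = (\<Sum>i<N. M i i * detN N (f t))"
  proof (intro sum.cong refl)
    fix i assume i: "i \<in> {..<N}"
    have "(\<Sum>c<N. M i c * detN N (g i c)) = M i i * detN N (g i i)"
    proof -
      have "(\<Sum>c<N. M i c * detN N (g i c)) = M i i * detN N (g i i) + (\<Sum>c\<in>{..<N} - {i}. M i c * detN N (g i c))"
        using i by (intro sum.remove) auto
      moreover have "(\<Sum>c\<in>{..<N} - {i}. M i c * detN N (g i c)) = 0"
      proof (intro sum.neutral ballI)
        fix c assume c: "c \<in> {..<N} - {i}"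
        have "detN N (g i c) = 0" using i c by (intro detN_ident_rows[of i N c]) (auto simp: g_def)
        then show "M i c * detN N (g i c) = 0" by simp
      qed
      ultimately show ?thesis by simp
    qed
    moreover have "g i i = f t" by (auto simp: g_def fun_eq_iff)
    ultimately show "(\<Sum>c<N. M i c * detN N (g i c)) = M i i * detN N (f t)" by simp
  qed
  ultimately show ?thesis by (simp add: sum_distrib_right)
qed



definition bs :: "nat \<Rightarrow> nat \<Rightarrow> nat set" where "bs n k = {j. j < n \<and> bit k j}"

lemma bs_inj: "inj_on (bs n) {..<2^n}"
proof (rule inj_onI)
  fix k l :: nat assume k: "k \<in> {..<2^n}" and l: "l \<in> {..<2^n}" and e: "bs n k = bs n l"
  have tk: "take_bit n k = k" and tl: "take_bit n l = l" using k l by (auto simp: take_bit_nat_eq_self_iff)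
  show "k = l"
  proof (rule bit_eqI)
    fix j
    have "bit (take_bit n k) j = bit (take_bit n l) j"
      using e unfolding bs_def bit_take_bit_iff by (auto simp: set_eq_iff)
    then show "bit k j = bit l j" using tk tl by simp
  qed
qed

lemma bs_image: "bs n ` {..<2^n} = Pow {..<n}"
proof (rule card_subset_eq)
  show "finite (Pow {..<n})" by simp
  show "bs n ` {..<2^n} \<subseteq> Pow {..<n}" by (auto simp: bs_def)
  show "card (bs n ` {..<2^n}) = card (Pow {..<n})"
    using bs_inj[of n] by (simp add: card_image card_Pow)
qed

lemma sector_eq: "sector n m = {k. k < 2^n \<and> card (bs n k) = m}"
  unfolding sector_def bs_def qdim_def by simp

lemma sum_sector:
  "(\<Sum>k\<in>sector n m. h (bs n k)) = (\<Sum>A\<in>{A. A \<subseteq> {..<n} \<and> card A = m}. h A)"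
proof -
  have sub: "sector n m \<subseteq> {..<2^n}" by (auto simp: sector_eq)
  have inj: "inj_on (bs n) (sector n m)" using inj_on_subset[OF bs_inj sub] .
  have img: "bs n ` sector n m = {A. A \<subseteq> {..<n} \<and> card A = m}"
  proof
    show "bs n ` sector n m \<subseteq> {A. A \<subseteq> {..<n} \<and> card A = m}"
      by (auto simp: sector_eq bs_def)
    show "{A. A \<subseteq> {..<n} \<and> card A = m} \<subseteq> bs n ` sector n m"
    proof
      fix A assume A: "A \<in> {A. A \<subseteq> {..<n} \<and> card A = m}"
      then have "A \<in> bs n ` {..<2^n}" using bs_image by auto
      then obtain k where "k < 2^n" "A = bs n k" by auto
      then show "A \<in> bs n ` sector n m" using A by (auto simp: sector_eq)
    qed
  qed
  show ?thesis using sum.reindex[OF inj, of h] img by simp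
qed

lemma sets0: "{A. A \<subseteq> {..<n::nat} \<and> card A = 0} = {{}}"
proof
  show "{A. A \<subseteq> {..<n} \<and> card A = 0} \<subseteq> {{}}"
  proof
    fix A assume "A \<in> {A. A \<subseteq> {..<n} \<and> card A = 0}"
    then have s: "A \<subseteq> {..<n}" "card A = 0" by auto
    have "finite A" using finite_subset[OF s(1) finite_lessThan] .
    then show "A \<in> {{}}" using s by simp
  qed
qed auto

lemma setsn: "{A. A \<subseteq> {..<n::nat} \<and> card A = n} = {{..<n}}"
proof
  show "{A. A \<subseteq> {..<n} \<and> card A = n} \<subseteq> {{..<n}}"
  proof
    fix A assume "A \<in> {A. A \<subseteq> {..<n} \<and> card A = n}"
    then have "A \<subseteq> {..<n}" "card A = card {..<n}" by auto
    then have "A = {..<n}" using card_subset_eq[OF finite_lessThan] by metis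
    then show "A \<in> {{..<n}}" by simp
  qed
qed auto

lemma sets1: "{A. A \<subseteq> {..<n::nat} \<and> card A = 1} = (\<lambda>j. {j}) ` {..<n}"
proof
  show "{A. A \<subseteq> {..<n} \<and> card A = 1} \<subseteq> (\<lambda>j. {j}) ` {..<n}"
  proof
    fix A assume "A \<in> {A. A \<subseteq> {..<n} \<and> card A = 1}"
    then have s: "A \<subseteq> {..<n}" "card A = 1" by auto
    from s(2) obtain j where j: "A = {j}" by (rule card_1_singletonE)
    then have "j < n" using s(1) by simp
    then show "A \<in> (\<lambda>j. {j}) ` {..<n}" using j by simp
  qed
  show "(\<lambda>j. {j}) ` {..<n} \<subseteq> {A. A \<subseteq> {..<n} \<and> card A = 1}" by (simp add: image_subset_iff)
qed

lemma setsn1: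
  fixes n :: nat
  assumes "n \<ge> 1"
  shows "{A. A \<subseteq> {..<n} \<and> card A = n - 1} = (\<lambda>j. {..<n} - {j}) ` {..<n}"
proof
  show "(\<lambda>j. {..<n} - {j}) ` {..<n} \<subseteq> {A. A \<subseteq> {..<n} \<and> card A = n - 1}" by auto
  show "{A. A \<subseteq> {..<n} \<and> card A = n - 1} \<subseteq> (\<lambda>j. {..<n} - {j}) ` {..<n}"
  proof
    fix A assume "A \<in> {A. A \<subseteq> {..<n} \<and> card A = n - 1}"
    then have A: "A \<subseteq> {..<n}" "card A = n - 1" by auto
    have "card ({..<n} - A) = n - (n - 1)" using A by (simp add: card_Diff_subset finite_subset[OF A(1)])
    also have "\<dots> = 1" using assms by simp
    finally obtain j where j: "{..<n} - A = {j}" by (rule card_1_singletonE)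
    then have "j < n" "A = {..<n} - {j}" using A(1) by auto
    then show "A \<in> (\<lambda>j. {..<n} - {j}) ` {..<n}" by auto
  qed
qed

lemma sum_split_S:
  fixes n :: nat and h :: "nat \<Rightarrow> complex"
  assumes "S \<subseteq> {..<n}"
  shows "(\<Sum>j<n. if j \<in> S then h j else c) = (\<Sum>j\<in>S. h j) + of_nat (n - card S) * c"
proof -
  have fS: "finite S" using assms finite_subset by auto
  have "(\<Sum>j<n. if j \<in> S then h j else c) = (\<Sum>j\<in>{..<n} - S. if j \<in> S then h j else c) + (\<Sum>j\<in>S. if j \<in> S then h j else c)"
    using assms by (intro sum.subset_diff) auto
  also have "(\<Sum>j\<in>{..<n} - S. if j \<in> S then h j else c) = of_nat (n - card S) * c"
    using assms fS by (simp add: card_Diff_subset)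
  finally show ?thesis by simp
qed

lemma comb:
  fixes n :: nat and G :: "nat set \<Rightarrow> complex"
  assumes S: "S \<subseteq> {..<n}" "card S \<le> 2" and n: "n \<ge> 2"
  defines "F \<equiv> \<lambda>m. (\<Sum>A\<in>{A. A \<subseteq> {..<n} \<and> card A = m}. G (S \<inter> A))"
  shows "F (n - 1) - F 1 + of_nat (n - 2) * (F 0 - F n) = 0"
proof -
  have fS: "finite S" using S finite_subset by auto
  have F0: "F 0 = G {}" unfolding F_def sets0 by simp
  have Fn: "F n = G S" unfolding F_def setsn using S by (simp add: Int_absorb2)
  have F1: "F 1 = (\<Sum>j\<in>S. G {j}) + of_nat (n - card S) * G {}"
  proof -
    have "F 1 = (\<Sum>j<n. G (S \<inter> {j}))" unfolding F_def sets1
      by (subst sum.reindex) (auto simp: inj_on_def)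
    also have "\<dots> = (\<Sum>j<n. if j \<in> S then G {j} else G {})" by (intro sum.cong) auto
    finally show ?thesis using sum_split_S[OF S(1)] by simp
  qed
  have Fn1: "F (n - 1) = (\<Sum>j\<in>S. G (S - {j})) + of_nat (n - card S) * G S"
  proof -
    have n1: "n \<ge> 1" using n by simp
    have inj: "inj_on (\<lambda>j. {..<n} - {j}) {..<n}" by (auto simp: inj_on_def)
    have "F (n - 1) = (\<Sum>j<n. G (S \<inter> ({..<n} - {j})))" unfolding F_def setsn1[OF n1]
      using sum.reindex[OF inj, of "\<lambda>A. G (S \<inter> A)"] by simp
    also have "\<dots> = (\<Sum>j<n. if j \<in> S then G (S - {j}) else G S)"
      using S by (intro sum.cong refl) (auto intro!: arg_cong[where f=G])
    finally show ?thesis using sum_split_S[OF S(1)] by simp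
  qed
  have cS: "card S = 0 \<or> card S = 1 \<or> card S = 2" using S by auto
  have nn: "of_nat (n - card S) = (of_nat n - of_nat (card S) :: complex)" using S n by (simp add: of_nat_diff)
  have n2: "of_nat (n - 2) = (of_nat n - 2 :: complex)" using n by (simp add: of_nat_diff)
  show ?thesis
  proof -
    consider "S = {}" | a where "S = {a}" | a b where "S = {a,b}" "a \<noteq> b"
      using cS fS by (metis card_0_eq card_1_singletonE card_2_iff)
    then show ?thesis
    proof cases
      case 1 then show ?thesis unfolding F0 Fn F1 Fn1 nn n2 by (simp add: algebra_simps)
    next
      case 2 then show ?thesis unfolding F0 Fn F1 Fn1 nn n2 by (simp add: algebra_simps)
    next
      case 3
      then have "{a,b} - {a} = {b}" "{a,b} - {b} = {a}" by auto
      then show ?thesis using 3 unfolding F0 Fn F1 Fn1 nn n2 by (simp add: algebra_simps)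
    qed
  qed
qed



lemma pick_bij:
  assumes "finite S"
  shows "bij_betw (pick S) {..<card S} S"
proof -
  have inj: "inj_on (pick S) {..<card S}"
  proof (rule inj_onI)
    fix a b assume a: "a \<in> {..<card S}" and b: "b \<in> {..<card S}" and e: "pick S a = pick S b"
    show "a = b"
    proof (rule ccontr)
      assume "a \<noteq> b"
      then have "a < b \<or> b < a" by arith
      then show False using pick_mono[of b S a] pick_mono[of a S b] a b e by auto
    qed
  qed
  have sub: "pick S ` {..<card S} \<subseteq> S" using pick_in_set by auto
  have "pick S ` {..<card S} = S"
    using card_subset_eq[OF assms sub] card_image[OF inj] by simp
  then show ?thesis using inj by (simp add: bij_betw_def)
qed

lemma sum_pick:
  assumes "finite S"
  shows "(\<Sum>k\<in>S. h k) = (\<Sum>a<card S. h (pick S a))"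
  using sum.reindex_bij_betw[OF pick_bij[OF assms], of h] by simp

lemma pick_inj_eq:
  assumes "finite S" "a < card S" "b < card S"
  shows "(pick S a = pick S b) = (a = b)"
  using bij_betw_imp_inj_on[OF pick_bij[OF assms(1)]] assms(2,3) by (auto simp: inj_on_def)

lemma sector_sub: "sector n m \<subseteq> {..<qdim n}" by (auto simp: sector_def)
lemma finite_sector: "finite (sector n m)" using finite_subset[OF sector_sub] by simp
lemma sector_card_set: "{i. i < qdim n \<and> i \<in> sector n m} = sector n m"
  using sector_sub by auto
lemma in_sector: "k < qdim n \<Longrightarrow> k \<in> sector n m \<longleftrightarrow> card (bs n k) = m"
  by (auto simp: sector_def bs_def)

lemma pick_sector: "a < card (sector n m) \<Longrightarrow> pick (sector n m) a \<in> sector n m"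
  by (rule pick_in_set) simp

lemma mult_entry:
  fixes A B :: "complex mat"
  assumes "A \<in> carrier_mat q q" "B \<in> carrier_mat q q" "k < q" "l < q"
  shows "(A * B) $$ (k,l) = (\<Sum>i<q. A $$ (k,i) * B $$ (i,l))"
  using assms by (simp add: scalar_prod_def atLeast0LessThan)

lemma totalZ_entry:
  assumes "k < qdim n" "l < qdim n"
  shows "totalZ n $$ (k,l) = (if k = l then of_nat n - 2 * of_nat (card (bs n k)) else 0)"
proof -
  have bsub: "bs n k \<subseteq> {..<n}" by (auto simp: bs_def)
  have cb: "card (bs n k) \<le> n" using card_mono[OF _ bsub] by simp
  have "totalZ n $$ (k,l) = (\<Sum>j<n. pauliZ n j $$ (k,l))"
    using assms by (simp add: totalZ_def)
  also have "\<dots> = (\<Sum>j<n. if k = l then (if bit k j then -1 else 1) else 0)"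
    using assms by (simp add: pauliZ_def)
  finally have e: "totalZ n $$ (k,l) = (\<Sum>j<n. if k = l then (if bit k j then -1 else 1) else (0::complex))" .
  show ?thesis
  proof (cases "k = l")
    case True
    have "(\<Sum>j<n. (if bit k j then -1 else 1 :: complex)) = (\<Sum>j<n. if j \<in> bs n k then -1 else 1)"
      by (intro sum.cong) (auto simp: bs_def)
    also have "\<dots> = (\<Sum>j\<in>bs n k. -1) + of_nat (n - card (bs n k)) * 1"
      by (rule sum_split_S[OF bsub])
    also have "\<dots> = of_nat n - 2 * of_nat (card (bs n k))"
      using cb by (simp add: of_nat_diff)
    finally show ?thesis using e True by simp
  qed (use e in simp)
qed

lemma u1_zero:
  fixes A :: "complex mat"
  assumes u: "u1_invariant n A" and A: "A \<in> carrier_mat (qdim n) (qdim n)"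
    and kl: "k < qdim n" "l < qdim n" and d: "card (bs n k) \<noteq> card (bs n l)"
  shows "A $$ (k,l) = 0"
proof -
  define z where "z k = (of_nat n - 2 * of_nat (card (bs n k)) :: complex)" for k
  have Z: "totalZ n \<in> carrier_mat (qdim n) (qdim n)" by (simp add: totalZ_def)
  have "(A * totalZ n) $$ (k,l) = (\<Sum>i<qdim n. A $$ (k,i) * totalZ n $$ (i,l))"
    by (rule mult_entry[OF A Z kl])
  also have "\<dots> = (\<Sum>i<qdim n. if i = l then A $$ (k,l) * z l else 0)"
    using kl by (intro sum.cong refl) (auto simp: totalZ_entry z_def)
  also have "\<dots> = A $$ (k,l) * z l" using kl by simp
  finally have 1: "(A * totalZ n) $$ (k,l) = A $$ (k,l) * z l" .
  have "(totalZ n * A) $$ (k,l) = (\<Sum>i<qdim n. totalZ n $$ (k,i) * A $$ (i,l))"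
    by (rule mult_entry[OF Z A kl])
  also have "\<dots> = (\<Sum>i<qdim n. if i = k then z k * A $$ (k,l) else 0)"
    using kl by (intro sum.cong refl) (auto simp: totalZ_entry z_def)
  also have "\<dots> = z k * A $$ (k,l)" using kl by simp
  finally have 2: "(totalZ n * A) $$ (k,l) = z k * A $$ (k,l)" .
  have "A $$ (k,l) * z l = z k * A $$ (k,l)" using 1 2 u unfolding u1_invariant_def by metis
  then have "A $$ (k,l) * (z l - z k) = 0" by (simp add: algebra_simps)
  moreover have "z l \<noteq> z k"
  proof
    assume "z l = z k"
    then have "(of_nat (card (bs n l)) :: complex) = of_nat (card (bs n k))" unfolding z_def by simp
    then show False using d of_nat_eq_iff by metis
  qed
  ultimately show ?thesis by simp
qed

lemma two_local_trace:
  fixes A :: "complex mat"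
  assumes a: "acts_only_on n S A" and S: "S \<subseteq> {..<n}" "card S \<le> 2" and n: "n \<ge> 2"
  defines "F \<equiv> \<lambda>m. (\<Sum>k\<in>sector n m. A $$ (k,k))"
  shows "F (n - 1) - F 1 + of_nat (n - 2) * (F 0 - F n) = 0"
proof -
  obtain B where B: "\<And>k l. k < qdim n \<Longrightarrow> l < qdim n \<Longrightarrow> A $$ (k,l) = (if (\<forall>j<n. j \<notin> S \<longrightarrow> bit k j = bit l j)
                        then B (\<lambda>j. j \<in> S \<and> bit k j) (\<lambda>j. j \<in> S \<and> bit l j) else 0)"
    using a unfolding acts_only_on_def by blast
  define G where "G X = B (\<lambda>j. j \<in> X) (\<lambda>j. j \<in> X)" for X
  have diag: "A $$ (k,k) = G (S \<inter> bs n k)" if "k < qdim n" for k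
  proof -
    have "(\<lambda>j. j \<in> S \<and> bit k j) = (\<lambda>j. j \<in> S \<inter> bs n k)"
      using S(1) by (auto simp: bs_def fun_eq_iff)
    then show ?thesis using B[OF that that] by (simp add: G_def)
  qed
  have "F m = (\<Sum>X\<in>{X. X \<subseteq> {..<n} \<and> card X = m}. G (S \<inter> X))" for m
  proof -
    have "F m = (\<Sum>k\<in>sector n m. G (S \<inter> bs n k))"
      unfolding F_def using sector_sub by (intro sum.cong refl diag) auto
    then show ?thesis using sum_sector[of "\<lambda>X. G (S \<inter> X)" n m] by simp
  qed
  then have "F = (\<lambda>m. (\<Sum>X\<in>{X. X \<subseteq> {..<n} \<and> card X = m}. G (S \<inter> X)))" by auto
  then show ?thesis using comb[OF S n, of G] by simp
qed

lemma vd_mult: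
  fixes F G :: "real \<Rightarrow> complex"
  assumes "(F has_vector_derivative (\<alpha> * F t)) (at t)" "(G has_vector_derivative (\<beta> * G t)) (at t)"
  shows "((\<lambda>s. F s * G s) has_vector_derivative ((\<alpha> + \<beta>) * (F t * G t))) (at t)"
  using has_vector_derivative_mult[OF assms] by (simp add: algebra_simps)

lemma vd_cnj:
  fixes F :: "real \<Rightarrow> complex"
  assumes "(F has_vector_derivative (\<alpha> * F t)) (at t)"
  shows "((\<lambda>s. cnj (F s)) has_vector_derivative (cnj \<alpha> * cnj (F t))) (at t)"
  using has_vector_derivative_cnj[OF assms] by simp

lemma vd_pow:
  fixes F :: "real \<Rightarrow> complex"
  assumes "(F has_vector_derivative (\<alpha> * F t)) (at t)"
  shows "((\<lambda>s. F s ^ k) has_vector_derivative ((of_nat k * \<alpha>) * (F t ^ k))) (at t)"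
proof (induction k)
  case 0
  then show ?case by (simp add: has_vector_derivative_const)
next
  case (Suc k)
  have "((\<lambda>s. F s * F s ^ k) has_vector_derivative ((\<alpha> + of_nat k * \<alpha>) * (F t * F t ^ k))) (at t)"
    by (rule vd_mult[OF assms Suc])
  then show ?case by (simp add: algebra_simps)
qed

lemma const_on_interval:
  fixes F :: "real \<Rightarrow> complex"
  assumes "finite E" "T \<ge> 0" "continuous_on {0..T} F"
    "\<And>t. t \<in> {0<..<T} - E \<Longrightarrow> (F has_vector_derivative 0) (at t)"
  shows "F T = F 0"
proof -
  have "F T = F 0"
  proof (rule has_derivative_zero_unique_strong_interval[of "E \<union> {0,T}" 0 T F "F 0" T])
    show "finite (E \<union> {0,T})" using assms(1) by simp
    show "continuous_on {0..T} F" by fact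
    show "F 0 = F 0" by simp
    show "T \<in> {0..T}" using assms(2) by simp
    fix x assume x: "x \<in> {0..T} - (E \<union> {0, T})"
    then have "x \<in> {0<..<T} - E" by auto
    then have "(F has_vector_derivative 0) (at x)" by (rule assms(4))
    then have "(F has_derivative (\<lambda>h. 0)) (at x)" by (simp add: has_vector_derivative_def)
    then show "(F has_derivative (\<lambda>h. 0)) (at x within {0..T})" by (rule has_derivative_at_withinI)
  qed
  then show ?thesis .
qed

lemma detN_cont:
  assumes "\<And>i j. i < N \<Longrightarrow> j < N \<Longrightarrow> continuous_on X (\<lambda>s. f s i j)"
  shows "continuous_on X (\<lambda>s. detN N (f s))"
  unfolding detN_expand
  by (intro continuous_intros assms) (auto simp: permutes_in_image)



theorem mainTheorem3:
  fixes n :: nat and T :: real and H V :: "real \<Rightarrow> complex mat"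
  assumes "n \<ge> 2" and "T \<ge> 0"
    and "\<And>t. t \<in> {0..T} \<Longrightarrow> H t \<in> carrier_mat (qdim n) (qdim n)"
    and "\<And>t. t \<in> {0..T} \<Longrightarrow> hermitian_op (H t)"
    and "\<And>t. t \<in> {0..T} \<Longrightarrow> u1_invariant n (H t)"
    and "\<And>t. t \<in> {0..T} \<Longrightarrow> two_local n (H t)"
    and "\<And>k l. k < qdim n \<Longrightarrow> l < qdim n \<Longrightarrow> piecewise_cont_on 0 T (\<lambda>t. H t $$ (k,l))"
    and "time_ordered_exp n T H V"
  shows "\<exists>z::int. Delta3 n (V T) = 2 * pi * of_int z"
proof -
  note n = assms(1) and T = assms(2) and Hc = assms(3) and Hh = assms(4) and Hu = assms(5) and Hl = assms(6)
  have tox: "(\<forall>t\<in>{0..T}. V t \<in> carrier_mat (qdim n) (qdim n)) \<and>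
     V 0 = 1\<^sub>m (qdim n) \<and>
     (\<forall>k < qdim n. \<forall>l < qdim n. continuous_on {0..T} (\<lambda>s. V s $$ (k,l))) \<and>
     (\<exists>E. finite E \<and> (\<forall>t\<in>{0<..<T} - E. \<forall>k < qdim n. \<forall>l < qdim n.
        ((\<lambda>s. V s $$ (k,l)) has_vector_derivative ((- \<i>) * ((H t * V t) $$ (k,l)))) (at t)))"
    using assms(8) unfolding time_ordered_exp_def .
  have Vc: "\<And>t. t \<in> {0..T} \<Longrightarrow> V t \<in> carrier_mat (qdim n) (qdim n)"
    and V0: "V 0 = 1\<^sub>m (qdim n)"
    and Vcont: "\<And>k l. k < qdim n \<Longrightarrow> l < qdim n \<Longrightarrow> continuous_on {0..T} (\<lambda>s. V s $$ (k,l))"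
    using tox by simp_all
  from tox obtain E where E: "finite E"
    and Vd: "\<And>t k l. t \<in> {0<..<T} - E \<Longrightarrow> k < qdim n \<Longrightarrow> l < qdim n \<Longrightarrow>
        ((\<lambda>s. V s $$ (k,l)) has_vector_derivative ((- \<i>) * ((H t * V t) $$ (k,l)))) (at t)"
    by blast
  define f where "f m s a b = V s $$ (pick (sector n m) a, pick (sector n m) b)" for m s a b
  define D where "D m s = detN (card (sector n m)) (f m s)" for m s
  define tr where "tr m t = (\<Sum>k\<in>sector n m. H t $$ (k,k))" for m t
  define c where "c m t = - \<i> * tr m t" for m t
  have pk: "pick (sector n m) a < qdim n" "card (bs n (pick (sector n m) a)) = m"
    if "a < card (sector n m)" for m a
  proof -
    have "pick (sector n m) a \<in> sector n m" using pick_sector[OF that] .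
    then show "pick (sector n m) a < qdim n" "card (bs n (pick (sector n m) a)) = m"
      by (simp_all add: sector_def bs_def)
  qed
  have Dd: "(D m has_vector_derivative (c m t * D m t)) (at t)" if t: "t \<in> {0<..<T} - E" for m t
  proof -
    have t': "t \<in> {0..T}" using t by auto
    let ?N = "card (sector n m)"
    let ?p = "pick (sector n m)"
    define M where "M a b = - \<i> * H t $$ (?p a, ?p b)" for a b
    have "((\<lambda>s. f m s a b) has_vector_derivative (\<Sum>c'<?N. M a c' * f m t c' b)) (at t)"
      if ab: "a < ?N" "b < ?N" for a b
    proof -
      have "(H t * V t) $$ (?p a, ?p b) = (\<Sum>j<qdim n. H t $$ (?p a, j) * V t $$ (j, ?p b))"
        by (rule mult_entry[OF Hc[OF t'] Vc[OF t'] pk(1)[OF ab(1)] pk(1)[OF ab(2)]])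
      also have "\<dots> = (\<Sum>j\<in>sector n m. H t $$ (?p a, j) * V t $$ (j, ?p b))"
      proof (rule sum.mono_neutral_right)
        show "finite {..<qdim n}" by simp
        show "sector n m \<subseteq> {..<qdim n}" by (rule sector_sub)
        show "\<forall>j\<in>{..<qdim n} - sector n m. H t $$ (?p a, j) * V t $$ (j, ?p b) = 0"
        proof
          fix j assume j: "j \<in> {..<qdim n} - sector n m"
          then have "card (bs n j) \<noteq> m" using in_sector[of j n m] by auto
          then have "H t $$ (?p a, j) = 0"
            using u1_zero[OF Hu[OF t'] Hc[OF t'] pk(1)[OF ab(1)], of j] j pk(2)[OF ab(1)] by auto
          then show "H t $$ (?p a, j) * V t $$ (j, ?p b) = 0" by simp
        qed
      qed
      also have "\<dots> = (\<Sum>c'<?N. H t $$ (?p a, ?p c') * V t $$ (?p c', ?p b))"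
        by (rule sum_pick[OF finite_sector])
      finally have "- \<i> * (H t * V t) $$ (?p a, ?p b) = (\<Sum>c'<?N. M a c' * f m t c' b)"
        by (simp add: M_def f_def sum_distrib_left mult.assoc)
      then show ?thesis using Vd[OF t pk(1)[OF ab(1)] pk(1)[OF ab(2)]] unfolding f_def by simp
    qed
    then have "((\<lambda>s. detN ?N (f m s)) has_vector_derivative ((\<Sum>a<?N. M a a) * detN ?N (f m t))) (at t)"
      by (rule jacobi)
    moreover have "(\<Sum>a<?N. M a a) = c m t"
      unfolding M_def c_def tr_def sum_pick[OF finite_sector, of "\<lambda>k. H t $$ (k,k)"]
      by (simp add: sum_distrib_left)
    ultimately show ?thesis unfolding D_def by simp
  qed
  have Dc: "continuous_on {0..T} (D m)" for m
    unfolding D_def[abs_def] f_def using pk(1) by (intro detN_cont Vcont) auto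
  have D0: "D m 0 = 1" for m
  proof -
    have "mat (card (sector n m)) (card (sector n m)) (\<lambda>(i,j). f m 0 i j) = 1\<^sub>m (card (sector n m))"
      using pk(1) by (auto simp: f_def V0 pick_inj_eq[OF finite_sector])
    then show ?thesis unfolding D_def detN_def by simp
  qed
  have cc: "cnj (c m t) = - c m t" if "t \<in> {0..T}" for m t
  proof -
    have herm: "\<forall>k < dim_row (H t). \<forall>l < dim_row (H t). H t $$ (l,k) = cnj (H t $$ (k,l))"
      using Hh[OF \<open>t \<in> {0..T}\<close>] unfolding hermitian_op_def by (rule conjunct2)
    have dr: "dim_row (H t) = qdim n" using Hc[OF \<open>t \<in> {0..T}\<close>] by simp
    have "cnj (H t $$ (k,k)) = H t $$ (k,k)" if "k \<in> sector n m" for k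
    proof -
      have "k < qdim n" using that sector_sub by auto
      then have "k < dim_row (H t)" using dr by simp
      then have "H t $$ (k,k) = cnj (H t $$ (k,k))" using herm by blast
      then show ?thesis by simp
    qed
    then have "cnj (tr m t) = tr m t" unfolding tr_def cnj_sum by (rule sum.cong[OF refl])
    then show ?thesis unfolding c_def by simp
  qed
  have trid: "c (n - 1) t - c 1 t + of_nat (n - 2) * (c 0 t - c n t) = 0" if t: "t \<in> {0..T}" for t
  proof -
    have ex: "\<exists>(N::nat) (terms :: nat \<Rightarrow> complex mat) (Ss :: nat \<Rightarrow> nat set).
        (\<forall>i<N. Ss i \<subseteq> {..<n} \<and> card (Ss i) \<le> 2 \<and> acts_only_on n (Ss i) (terms i)) \<and>
        (\<forall>k < qdim n. \<forall>l < qdim n. H t $$ (k,l) = (\<Sum>i<N. terms i $$ (k,l)))"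
      using Hl[OF t] unfolding two_local_def by (rule conjunct2)
    then obtain N where "\<exists>(terms :: nat \<Rightarrow> complex mat) (Ss :: nat \<Rightarrow> nat set).
        (\<forall>i<N. Ss i \<subseteq> {..<n} \<and> card (Ss i) \<le> 2 \<and> acts_only_on n (Ss i) (terms i)) \<and>
        (\<forall>k < qdim n. \<forall>l < qdim n. H t $$ (k,l) = (\<Sum>i<N. terms i $$ (k,l)))" by (rule exE)
    then obtain terms where "\<exists>(Ss :: nat \<Rightarrow> nat set).
        (\<forall>i<N. Ss i \<subseteq> {..<n} \<and> card (Ss i) \<le> 2 \<and> acts_only_on n (Ss i) (terms i)) \<and>
        (\<forall>k < qdim n. \<forall>l < qdim n. H t $$ (k,l) = (\<Sum>i<N. terms i $$ (k,l)))" by (rule exE)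
    then obtain Ss where tmH: "(\<forall>i<N. Ss i \<subseteq> {..<n} \<and> card (Ss i) \<le> 2 \<and> acts_only_on n (Ss i) (terms i)) \<and>
        (\<forall>k < qdim n. \<forall>l < qdim n. H t $$ (k,l) = (\<Sum>i<N. terms i $$ (k,l)))" by (rule exE)
    have tm: "Ss i \<subseteq> {..<n}" "card (Ss i) \<le> 2" "acts_only_on n (Ss i) (terms i)" if "i < N" for i
      using conjunct1[OF tmH, rule_format, OF that] by simp_all
    have Hs: "H t $$ (k,k) = (\<Sum>i<N. terms i $$ (k,k))" if "k < qdim n" for k
      using conjunct2[OF tmH, rule_format, OF that that] .
    define F where "F i m = (\<Sum>k\<in>sector n m. terms i $$ (k,k))" for i m
    have trF: "tr m t = (\<Sum>i<N. F i m)" for m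
    proof -
      have "tr m t = (\<Sum>k\<in>sector n m. \<Sum>i<N. terms i $$ (k,k))"
      proof (unfold tr_def, rule sum.cong[OF refl])
        fix k assume "k \<in> sector n m"
        then have "k < qdim n" using sector_sub by auto
        then show "H t $$ (k,k) = (\<Sum>i<N. terms i $$ (k,k))" by (rule Hs)
      qed
      also have "\<dots> = (\<Sum>i<N. \<Sum>k\<in>sector n m. terms i $$ (k,k))" by (rule sum.swap)
      finally show ?thesis unfolding F_def .
    qed
    have "F i (n - 1) - F i 1 + of_nat (n - 2) * (F i 0 - F i n) = 0" if "i < N" for i
      unfolding F_def by (rule two_local_trace[OF tm(3)[OF that] tm(1)[OF that] tm(2)[OF that] n])
    then have "(\<Sum>i<N. F i (n - 1) - F i 1 + of_nat (n - 2) * (F i 0 - F i n)) = 0"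
      by (intro sum.neutral) simp
    moreover have "tr (n - 1) t - tr 1 t + of_nat (n - 2) * (tr 0 t - tr n t) =
       (\<Sum>i<N. F i (n - 1) - F i 1 + of_nat (n - 2) * (F i 0 - F i n))"
      unfolding trF by (simp only: sum.distrib sum_subtractf sum_distrib_left right_diff_distrib)
    ultimately have "tr (n - 1) t - tr 1 t + of_nat (n - 2) * (tr 0 t - tr n t) = 0" by simp
    then have "- \<i> * (tr (n - 1) t - tr 1 t + of_nat (n - 2) * (tr 0 t - tr n t)) = 0" by simp
    then show ?thesis unfolding c_def by (simp only: right_diff_distrib distrib_left mult.left_commute)
  qed
  have absD: "cmod (D m T) = 1" for m
  proof -
    have "(\<lambda>s. D m s * cnj (D m s)) T = (\<lambda>s. D m s * cnj (D m s)) 0"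
    proof (rule const_on_interval[OF E T])
      show "continuous_on {0..T} (\<lambda>s. D m s * cnj (D m s))"
        by (intro continuous_intros Dc)
      fix t assume t: "t \<in> {0<..<T} - E"
      have "((\<lambda>s. D m s * cnj (D m s)) has_vector_derivative ((c m t + cnj (c m t)) * (D m t * cnj (D m t)))) (at t)"
        by (intro vd_mult vd_cnj Dd t)
      moreover have "c m t + cnj (c m t) = 0" using cc[of t m] t by auto
      ultimately show "((\<lambda>s. D m s * cnj (D m s)) has_vector_derivative 0) (at t)" by (simp only: mult_zero_left)
    qed
    then have "D m T * cnj (D m T) = 1" using D0 by simp
    then have "complex_of_real ((cmod (D m T))^2) = 1" by (simp only: complex_norm_square)
    then have "(cmod (D m T))^2 = 1" by (simp only: of_real_eq_1_iff)
    then show ?thesis using norm_ge_zero[of "D m T"] by (auto simp: power2_eq_1_iff)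
  qed
  define Q where "Q s = D (n - 1) s * cnj (D 1 s) * (D 0 s * cnj (D n s)) ^ (n - 2)" for s
  have QT: "Q T = 1"
  proof -
    have "Q T = Q 0"
    proof (rule const_on_interval[OF E T])
      show "continuous_on {0..T} Q" unfolding Q_def[abs_def]
        by (intro continuous_intros Dc)
      fix t assume t: "t \<in> {0<..<T} - E"
      then have t': "t \<in> {0..T}" by auto
      have "(Q has_vector_derivative ((c (n - 1) t + cnj (c 1 t) + of_nat (n - 2) * (c 0 t + cnj (c n t))) * Q t)) (at t)"
        unfolding Q_def[abs_def] by (intro vd_mult vd_cnj vd_pow Dd t)
      moreover have "c (n - 1) t + cnj (c 1 t) + of_nat (n - 2) * (c 0 t + cnj (c n t)) = 0"
        using trid[OF t'] cc[OF t'] by (simp add: algebra_simps)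
      ultimately show "(Q has_vector_derivative 0) (at t)" by (simp only: mult_zero_left)
    qed
    then show ?thesis unfolding Q_def by (simp add: D0)
  qed
  have th: "theta n (V T) m = Arg (D m T)" for m
  proof -
    have "block n (V T) m = mat (card (sector n m)) (card (sector n m)) (\<lambda>(i,j). f m T i j)"
      unfolding block_def submatrix_def f_def using Vc[of T] T
      by (simp add: sector_card_set)
    then show ?thesis unfolding theta_def D_def detN_def by simp
  qed
  have De: "D m T = exp (\<i> * of_real (theta n (V T) m))" for m
  proof -
    have "D m T \<noteq> 0" using absD[of m] by auto
    then have "cis (Arg (D m T)) = sgn (D m T)" by (rule cis_Arg)
    also have "\<dots> = D m T" using absD[of m] by (simp add: sgn_div_norm)
    finally show ?thesis unfolding th cis_conv_exp by simp
  qed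
  define x where "x = theta n (V T) (n - 1) - theta n (V T) 1 + real (n - 2) * (theta n (V T) 0 - theta n (V T) n)"
  have "Q T = exp (\<i> * of_real x)"
    unfolding Q_def De exp_cnj x_def
    by (simp add: exp_add[symmetric] exp_diff[symmetric] exp_of_nat_mult[symmetric] algebra_simps)
  then have "exp (\<i> * of_real x) = 1" using QT by simp
  then obtain z :: int where "x = of_int (2 * z) * pi" unfolding exp_eq_1 by auto
  moreover have "Delta3 n (V T) = x" unfolding Delta3_def x_def using n by (simp add: of_nat_diff algebra_simps)
  ultimately show ?thesis by (intro exI[of _ z]) simp
qed


end
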